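(* Let $\Gamma\subseteq\mathrm{Aff}(\mathbb{R}^n)$ be an $n$-dimensional crystallographic group whose subgroup of pure translations is exactly $\mathbb{Z}^n$, with holonomy group $F\subseteq\mathrm{GL}_n(\mathbb{Z})$. Then there exists a finite set $\Delta^{base}\subseteq\mathbb{R}^n$ such that for every $d^{base}\in\Delta^{base}$ the map $\xi_{(d^{base},I_n)}$ is an automorphism of $\Gamma$, and every $\varphi\in\mathrm{Aut}(\Gamma)$ with $\varphi|_{\mathbb{Z}^n}=I_n$ can be written as $\varphi=\iota\circ\xi_{(d^{base},I_n)}$ where $\iota=\xi_{(d^{int},I_n)}$ is an inner automorphism of $\Gamma$ with $d^{int}\in\mathbb{Z}^n$ and $d^{base}\in\Delta^{base}$.
   Context: $\mathrm{Aff}(\mathbb{R}^n)=\mathbb{R}^n\rtimes\mathrm{GL}_n(\mathbb{R})$ with multiplication $(d_1,D_1)(d_2,D_2)=(d_1+D_1d_2,D_1D_2)$. An $n$-dimensional crystallographic group is a discrete cocompact subgroup of the Euclidean group $\mathbb{R}^n\rtimes O(n)$; here it is realised (as is always possible) inside $\mathrm{Aff}(\mathbb{R}^n)$ such that $\Gamma\cap\mathbb{R}^n=\{(z,I_n)\mid z\in\mathbb{Z}^n\}$, identified with $\mathbb{Z}^n$. The holonomy group is $F=\{A\mid\exists a:\ (a,A)\in\Gamma\}\subseteq\mathrm{GL}_n(\mathbb{Z})$, a finite group. For $(d,D)\in\mathrm{Aff}(\mathbb{R}^n)$, $\xi_{(d,D)}$ denotes the map $\gamma\mapsto(d,D)\gamma(d,D)^{-1}$.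 Every automorphism $\varphi$ of $\Gamma$ is of the form $\xi_{(d,D)}$ for some $(d,D)\in\mathrm{Aff}(\mathbb{R}^n)$, and then $\varphi|_{\mathbb{Z}^n}$ is given by the matrix $D$. *)

theory Defs
  imports "HOL-Analysis.Analysis"
begin

text \<open>Elements of Aff(R^n) = R^n \<rtimes> GL_n(R) are represented as pairs (d, D).\<close>

type_synonym 'n aff = "(real ^ 'n) \<times> (real ^ 'n ^ 'n)"

definition aff_mult :: "'n::finite aff \<Rightarrow> 'n aff \<Rightarrow> 'n aff" where
  "aff_mult g h = (fst g + snd g *v fst h, snd g ** snd h)"

definition aff_inv :: "'n::finite aff \<Rightarrow> 'n aff" where
  "aff_inv g = (- (matrix_inv (snd g) *v fst g), matrix_inv (snd g))"

definition Aff :: "'n::finite aff set" where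
  "Aff = {g. invertible (snd g)}"

definition Euc :: "'n::finite aff set" where
  "Euc = {g. orthogonal_matrix (snd g)}"

definition aff_subgroup :: "'n::finite aff set \<Rightarrow> 'n aff set \<Rightarrow> bool" where
  "aff_subgroup H G \<longleftrightarrow> H \<subseteq> G \<and> (0, mat 1) \<in> H \<and>
     (\<forall>g\<in>H. \<forall>h\<in>H. aff_mult g h \<in> H) \<and> (\<forall>g\<in>H. aff_inv g \<in> H)"

definition discrete_set :: "'n::finite aff set \<Rightarrow> bool" where
  "discrete_set H \<longleftrightarrow> (\<forall>g\<in>H. \<exists>e>0. \<forall>h\<in>H. dist h g < e \<longrightarrow> h = g)"

text \<open>Cocompact in the Euclidean group: Euc/H is compact, i.e. Euc = K H for a compact K.\<close>
definition cocompact_in_Euc :: "'n::finite aff set \<Rightarrow> bool" where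
  "cocompact_in_Euc H \<longleftrightarrow> (\<exists>K. compact K \<and> K \<subseteq> Euc \<and>
     Euc \<subseteq> {aff_mult k h | k h. k \<in> K \<and> h \<in> H})"

definition xi :: "'n::finite aff \<Rightarrow> 'n aff \<Rightarrow> 'n aff" where
  "xi a g = aff_mult (aff_mult a g) (aff_inv a)"

definition crystallographic :: "'n::finite aff set \<Rightarrow> bool" where
  "crystallographic \<Gamma> \<longleftrightarrow> aff_subgroup \<Gamma> Aff \<and>
     (\<exists>a\<in>Aff. aff_subgroup (xi a ` \<Gamma>) Euc \<and> discrete_set (xi a ` \<Gamma>)
                \<and> cocompact_in_Euc (xi a ` \<Gamma>))"

definition int_vecs :: "(real ^ 'n::finite) set" where
  "int_vecs = {z. \<forall>i. z $ i \<in> \<int>}"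

definition holonomy :: "'n::finite aff set \<Rightarrow> (real ^ 'n ^ 'n) set" where
  "holonomy \<Gamma> = snd ` \<Gamma>"

definition is_aut :: "'n::finite aff set \<Rightarrow> ('n aff \<Rightarrow> 'n aff) \<Rightarrow> bool" where
  "is_aut \<Gamma> \<phi> \<longleftrightarrow> bij_betw \<phi> \<Gamma> \<Gamma> \<and>
     (\<forall>g\<in>\<Gamma>. \<forall>h\<in>\<Gamma>. \<phi> (aff_mult g h) = aff_mult (\<phi> g) (\<phi> h))"

end

theory Submission
  imports Defs
begin

lemma minv: assumes "invertible (A::real^'n::finite^'n)"
  shows "A ** matrix_inv A = mat 1" "matrix_inv A ** A = mat 1"
proof -
  have "\<exists>A'. A ** A' = mat 1 \<and> A' ** A = mat 1" using assms invertible_def by blast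
  hence "A ** matrix_inv A = mat 1 \<and> matrix_inv A ** A = mat 1"
    unfolding matrix_inv_def by (rule someI_ex)
  thus "A ** matrix_inv A = mat 1" "matrix_inv A ** A = mat 1" by auto
qed

lemma minv1: "matrix_inv (mat 1 :: real^'n::finite^'n) = mat 1"
proof -
  have "invertible (mat 1 :: real^'n::finite^'n)" unfolding invertible_def by (intro exI[of _ "mat 1"]) simp
  from minv(1)[OF this] show ?thesis by simp
qed

lemma aff_mult_pair[simp]: "aff_mult (a,A) (b,B) = (a + A *v b, A ** B)"
  by (simp add: aff_mult_def)

lemma mv_neg[simp]: "(A::real^'n::finite^'m::finite) *v (- d) = - (A *v d)"
  by (simp add: vec_eq_iff matrix_vector_mult_def sum_negf)

lemma xi_trans[simp]: "xi (d, mat 1) (a, A) = (a + d - A *v d, A)"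
  by (simp add: xi_def aff_inv_def minv1 algebra_simps)

lemma xi_trans': "xi (d, mat 1) g = (fst g + d - snd g *v d, snd g)"
  by (cases g) simp

lemma int_vecs_add: "x \<in> int_vecs \<Longrightarrow> y \<in> int_vecs \<Longrightarrow> x + y \<in> int_vecs"
  by (auto simp: int_vecs_def)
lemma int_vecs_diff: "x \<in> int_vecs \<Longrightarrow> y \<in> int_vecs \<Longrightarrow> x - y \<in> int_vecs"
  by (auto simp: int_vecs_def)
lemma int_vecs_neg: "x \<in> int_vecs \<Longrightarrow> - x \<in> int_vecs"
  by (auto simp: int_vecs_def)
lemma int_vecs_axis: "axis j (1::real) \<in> int_vecs"
  by (auto simp: int_vecs_def axis_def)

lemma finite_vecs: assumes "finite K" shows "finite {v::'a^'n::finite. \<forall>i. v$i \<in> K}"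
proof -
  have "{v::'a^'n. \<forall>i. v$i \<in> K} \<subseteq> vec_lambda ` (PiE UNIV (\<lambda>_. K))"
  proof
    fix v :: "'a^'n" assume "v \<in> {v. \<forall>i. v$i \<in> K}"
    hence "(\<lambda>i. v$i) \<in> PiE UNIV (\<lambda>_. K)" by auto
    moreover have "v = vec_lambda (\<lambda>i. v$i)" by simp
    ultimately show "v \<in> vec_lambda ` (PiE UNIV (\<lambda>_. K))" by blast
  qed
  moreover have "finite (PiE (UNIV::'n set) (\<lambda>_. K))" using assms by (simp add: finite_PiE)
  ultimately show ?thesis using finite_subset by blast
qed

lemma finite_mats: assumes "finite K" shows "finite {B::'a^'n::finite^'m::finite. \<forall>i j. B$i$j \<in> K}"
proof -
  have "{B::'a^'n^'m. \<forall>i j. B$i$j \<in> K} \<subseteq> {B. \<forall>i. B$i \<in> {v. \<forall>j. v$j \<in> K}}" by auto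
  thus ?thesis using finite_vecs[OF finite_vecs[OF assms]] finite_subset by blast
qed

context
  fixes \<Gamma> :: "'n::finite aff set"
  assumes sub: "aff_subgroup \<Gamma> Aff" and tr: "{z. (z, mat 1) \<in> \<Gamma>} = int_vecs"
begin

lemma G_invertible: "g \<in> \<Gamma> \<Longrightarrow> invertible (snd g)"
  using sub by (auto simp: aff_subgroup_def Aff_def)

lemma G_mult: "g \<in> \<Gamma> \<Longrightarrow> h \<in> \<Gamma> \<Longrightarrow> aff_mult g h \<in> \<Gamma>"
  using sub by (auto simp: aff_subgroup_def)

lemma G_inv: "g \<in> \<Gamma> \<Longrightarrow> aff_inv g \<in> \<Gamma>"
  using sub by (auto simp: aff_subgroup_def)

lemma G_one: "(0, mat 1) \<in> \<Gamma>"
  using sub by (auto simp: aff_subgroup_def)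

lemma G_trans: "z \<in> int_vecs \<Longrightarrow> (z, mat 1) \<in> \<Gamma>"
  using tr by auto

lemma G_trans': "(z, mat 1) \<in> \<Gamma> \<Longrightarrow> z \<in> int_vecs"
  using tr by auto

lemma G_diff: assumes "(a,A) \<in> \<Gamma>" "(b,A) \<in> \<Gamma>" shows "b - a \<in> int_vecs"
proof -
  have inv: "invertible A" using G_invertible[OF assms(1)] by simp
  have "aff_mult (b,A) (aff_inv (a,A)) \<in> \<Gamma>" using G_mult G_inv assms by blast
  moreover have "aff_mult (b,A) (aff_inv (a,A)) = (b - a, mat 1)"
    by (simp add: aff_inv_def matrix_vector_mul_assoc minv[OF inv])
  ultimately show ?thesis using G_trans' by simp
qed

lemma G_shift: assumes "(a,A) \<in> \<Gamma>" "z \<in> int_vecs" shows "(a + z, A) \<in> \<Gamma>"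
proof -
  have "aff_mult (z, mat 1) (a,A) \<in> \<Gamma>" using G_mult G_trans assms by blast
  thus ?thesis by (simp add: add.commute)
qed

lemma G_Aint: assumes "(a,A) \<in> \<Gamma>" "z \<in> int_vecs" shows "A *v z \<in> int_vecs"
proof -
  have "aff_mult (a,A) (z, mat 1) \<in> \<Gamma>" using G_mult G_trans assms by blast
  hence "(a + A *v z, A) \<in> \<Gamma>" by simp
  from G_diff[OF assms(1) this] show ?thesis by simp
qed

lemma is_aut_xi:
  assumes h: "\<forall>g\<in>\<Gamma>. d - snd g *v d \<in> int_vecs"
  shows "is_aut \<Gamma> (xi (d, mat 1))"
  unfolding is_aut_def bij_betw_def
proof (intro conjI ballI)
  show "inj_on (xi (d, mat 1)) \<Gamma>"
    by (auto simp: inj_on_def xi_trans' prod_eq_iff)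
  show "xi (d, mat 1) ` \<Gamma> = \<Gamma>"
  proof
    show "xi (d, mat 1) ` \<Gamma> \<subseteq> \<Gamma>"
    proof
      fix y assume "y \<in> xi (d, mat 1) ` \<Gamma>"
      then obtain a A where g: "(a,A) \<in> \<Gamma>" and y: "y = xi (d, mat 1) (a,A)" by auto
      have "(a + (d - A *v d), A) \<in> \<Gamma>" using G_shift[OF g] h g by fastforce
      thus "y \<in> \<Gamma>" using y by (simp add: algebra_simps)
    qed
    show "\<Gamma> \<subseteq> xi (d, mat 1) ` \<Gamma>"
    proof
      fix y assume y: "y \<in> \<Gamma>"
      obtain a A where ya: "y = (a,A)" by fastforce
      have "(a + - (d - A *v d), A) \<in> \<Gamma>" using G_shift[of a A] int_vecs_neg h y ya by fastforce
      moreover have "xi (d, mat 1) (a + - (d - A *v d), A) = y" using ya by simp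
      ultimately show "y \<in> xi (d, mat 1) ` \<Gamma>" by (metis image_eqI)
    qed
  qed
  fix g h assume "g \<in> \<Gamma>" "h \<in> \<Gamma>"
  show "xi (d, mat 1) (aff_mult g h) = aff_mult (xi (d, mat 1) g) (xi (d, mat 1) h)"
    by (cases g; cases h) (simp add: algebra_simps matrix_vector_mul_assoc)
qed

end

lemma orth_entry: assumes "orthogonal_matrix (R::real^'n::finite^'n)" shows "\<bar>R$k$l\<bar> \<le> 1"
proof -
  have "norm (column l R) = 1" using assms orthogonal_matrix_orthonormal_columns by blast
  moreover have "\<bar>column l R $ k\<bar> \<le> norm (column l R)" by (rule component_le_norm_cart)
  ultimately show ?thesis by (simp add: column_def)
qed

lemma triple_entry_bound:
  fixes P R Q :: "real^'n::finite^'n"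
  assumes "\<And>k l. \<bar>R$k$l\<bar> \<le> 1"
  shows "\<bar>(P ** R ** Q)$i$j\<bar> \<le> (\<Sum>i\<in>UNIV. \<Sum>j\<in>UNIV. \<Sum>k\<in>UNIV. \<Sum>l\<in>UNIV. \<bar>P$i$k\<bar> * \<bar>Q$l$j\<bar>)"
proof -
  have eq: "(P ** R ** Q)$i$j = (\<Sum>l\<in>UNIV. (\<Sum>k\<in>UNIV. P$i$k * R$k$l) * Q$l$j)"
    by (simp add: matrix_matrix_mult_def)
  have "\<bar>(\<Sum>l\<in>UNIV. (\<Sum>k\<in>UNIV. P$i$k * R$k$l) * Q$l$j)\<bar> \<le> (\<Sum>l\<in>UNIV. \<bar>(\<Sum>k\<in>UNIV. P$i$k * R$k$l)\<bar> * \<bar>Q$l$j\<bar>)"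
    by (metis (no_types, lifting) abs_mult sum.cong sum_abs)
  also have "\<dots> \<le> (\<Sum>l\<in>UNIV. (\<Sum>k\<in>UNIV. \<bar>P$i$k\<bar>) * \<bar>Q$l$j\<bar>)"
  proof (rule sum_mono, rule mult_right_mono)
    fix l
    have "\<bar>(\<Sum>k\<in>UNIV. P$i$k * R$k$l)\<bar> \<le> (\<Sum>k\<in>UNIV. \<bar>P$i$k * R$k$l\<bar>)" by (rule sum_abs)
    also have "\<dots> \<le> (\<Sum>k\<in>UNIV. \<bar>P$i$k\<bar>)"
      by (rule sum_mono) (simp only: abs_mult, rule mult_left_le[OF assms abs_ge_zero])
    finally show "\<bar>(\<Sum>k\<in>UNIV. P$i$k * R$k$l)\<bar> \<le> (\<Sum>k\<in>UNIV. \<bar>P$i$k\<bar>)" .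
  qed simp
  also have "\<dots> = (\<Sum>k\<in>UNIV. \<Sum>l\<in>UNIV. \<bar>P$i$k\<bar> * \<bar>Q$l$j\<bar>)"
    by (simp only: sum_distrib_right) (rule sum.swap)
  also have "\<dots> \<le> (\<Sum>j\<in>UNIV. \<Sum>k\<in>UNIV. \<Sum>l\<in>UNIV. \<bar>P$i$k\<bar> * \<bar>Q$l$j\<bar>)"
    by (rule member_le_sum[where f="\<lambda>j. \<Sum>k\<in>UNIV. \<Sum>l\<in>UNIV. \<bar>P$i$k\<bar> * \<bar>Q$l$j\<bar>"])
       (simp_all add: sum_nonneg)
  also have "\<dots> \<le> (\<Sum>i\<in>UNIV. \<Sum>j\<in>UNIV. \<Sum>k\<in>UNIV. \<Sum>l\<in>UNIV. \<bar>P$i$k\<bar> * \<bar>Q$l$j\<bar>)"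
    by (rule member_le_sum[where f="\<lambda>i. \<Sum>j\<in>UNIV. \<Sum>k\<in>UNIV. \<Sum>l\<in>UNIV. \<bar>P$i$k\<bar> * \<bar>Q$l$j\<bar>"])
       (simp_all add: sum_nonneg)
  finally show ?thesis using eq by simp
qed

lemma finite_bounded_ints: "finite {x::real. x \<in> \<int> \<and> \<bar>x\<bar> \<le> C}"
proof -
  have "{x::real. x \<in> \<int> \<and> \<bar>x\<bar> \<le> C} \<subseteq> of_int ` {-\<lceil>C\<rceil>..\<lceil>C\<rceil>}"
  proof
    fix x assume "x \<in> {x::real. x \<in> \<int> \<and> \<bar>x\<bar> \<le> C}"
    then obtain k where k: "x = of_int k" "\<bar>of_int k\<bar> \<le> C" by (auto elim: Ints_cases)
    hence "k \<in> {-\<lceil>C\<rceil>..\<lceil>C\<rceil>}" proof -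
      have "of_int k \<le> C" "- C \<le> of_int k" using k(2) by linarith+
      hence "k \<le> \<lceil>C\<rceil>" "-\<lceil>C\<rceil> \<le> k" by (simp_all add: le_ceiling_iff ceiling_le_iff) linarith+
      thus ?thesis by simp
    qed
    thus "x \<in> of_int ` {-\<lceil>C\<rceil>..\<lceil>C\<rceil>}" using k by blast
  qed
  thus ?thesis using finite_subset by blast
qed

lemma finite_holonomy:
  fixes \<Gamma> :: "'n::finite aff set"
  assumes cr: "crystallographic \<Gamma>" and tr: "{z. (z, mat 1) \<in> \<Gamma>} = int_vecs"
  shows "finite (snd ` \<Gamma>)"
proof -
  have sub: "aff_subgroup \<Gamma> Aff" using cr unfolding crystallographic_def by (rule conjunct1)
  obtain a where a: "a \<in> Aff" "aff_subgroup (xi a ` \<Gamma>) Euc" using cr unfolding crystallographic_def by auto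
  obtain e E where aE: "a = (e,E)" by fastforce
  have invE: "invertible E" using a(1) aE by (simp add: Aff_def)
  define C where "C = (\<Sum>i\<in>UNIV. \<Sum>j\<in>UNIV. \<Sum>k\<in>UNIV. \<Sum>l\<in>UNIV. \<bar>matrix_inv E$i$k\<bar> * \<bar>E$l$j\<bar>)"
  have "snd ` \<Gamma> \<subseteq> {B. \<forall>i j. B$i$j \<in> {x::real. x \<in> \<int> \<and> \<bar>x\<bar> \<le> C}}"
  proof
    fix B assume "B \<in> snd ` \<Gamma>"
    then obtain b where bB: "(b,B) \<in> \<Gamma>" by force
    have "xi a (b,B) \<in> Euc" using a(2) bB unfolding aff_subgroup_def by blast
    hence orth: "orthogonal_matrix (E ** B ** matrix_inv E)"
      by (simp add: Euc_def xi_def aff_inv_def aE)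
    have Beq: "B = matrix_inv E ** (E ** B ** matrix_inv E) ** E"
      by (metis matrix_mul_assoc matrix_mul_lid matrix_mul_rid minv(2)[OF invE])
    show "B \<in> {B. \<forall>i j. B$i$j \<in> {x::real. x \<in> \<int> \<and> \<bar>x\<bar> \<le> C}}"
    proof (intro CollectI allI conjI)
      fix i j
      have "B *v axis j 1 \<in> int_vecs" using G_Aint[OF sub tr bB int_vecs_axis] .
      hence "(B *v axis j 1)$i \<in> \<int>" by (simp add: int_vecs_def)
      thus "B$i$j \<in> \<int>" by (simp add: matrix_vector_mult_basis column_def)
      have "\<bar>B$i$j\<bar> \<le> C" unfolding C_def
        by (subst Beq, rule triple_entry_bound, rule orth_entry[OF orth])
      thus "\<bar>B$i$j\<bar> \<le> C" .
    qed
  qed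
  thus ?thesis using finite_mats[OF finite_bounded_ints] finite_subset by blast
qed

lemma mv_scaleR: "(A::real^'n::finite^'m::finite) *v (r *\<^sub>R v) = r *\<^sub>R (A *v v)"
  by (simp add: vec_eq_iff matrix_vector_mult_def sum_distrib_left algebra_simps)

lemma mv_sum: "(A::real^'n::finite^'m::finite) *v (sum f S) = sum (\<lambda>x. A *v f x) S"
  unfolding vec_eq_iff matrix_vector_mult_def by (simp add: sum_distrib_left sum_component) (rule allI, rule sum.swap)

lemma int_vecs_sum: "(\<And>x. x \<in> S \<Longrightarrow> f x \<in> int_vecs) \<Longrightarrow> sum f S \<in> int_vecs"
  by (auto simp: int_vecs_def intro!: Ints_sum)

lemma cols_eq: assumes "\<And>j. (A::real^'n::finite^'n) *v axis j 1 = B *v axis j 1" shows "A = B"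
  using assms by (simp add: matrix_vector_mult_basis column_def vec_eq_iff)

context
  fixes \<Gamma> :: "'n::finite aff set" and \<phi>
  assumes sub: "aff_subgroup \<Gamma> Aff" and tr: "{z. (z, mat 1) \<in> \<Gamma>} = int_vecs"
    and aut: "is_aut \<Gamma> \<phi>" and fix1: "\<forall>z\<in>int_vecs. \<phi> (z, mat 1) = (z, mat 1)"
begin

lemma phi_mem: "g \<in> \<Gamma> \<Longrightarrow> \<phi> g \<in> \<Gamma>"
  using aut unfolding is_aut_def bij_betw_def by blast

lemma phi_hom: "g \<in> \<Gamma> \<Longrightarrow> h \<in> \<Gamma> \<Longrightarrow> \<phi> (aff_mult g h) = aff_mult (\<phi> g) (\<phi> h)"
  using aut unfolding is_aut_def by blast

lemma phi_snd: assumes g: "g \<in> \<Gamma>" shows "snd (\<phi> g) = snd g"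
proof -
  obtain a A where gA: "g = (a,A)" by fastforce
  obtain a' A' where pA: "\<phi> g = (a',A')" by fastforce
  have "A' *v axis j 1 = A *v axis j 1" for j
  proof -
    let ?z = "axis j (1::real) :: real^'n"
    have z: "?z \<in> int_vecs" by (rule int_vecs_axis)
    have Az: "A *v ?z \<in> int_vecs" using G_Aint[OF sub tr _ z] g gA by simp
    have e: "aff_mult g (?z, mat 1) = aff_mult (A *v ?z, mat 1) g" using gA by simp
    have "\<phi> (aff_mult g (?z, mat 1)) = (a' + A' *v ?z, A')"
      using phi_hom[OF g G_trans[OF sub tr z]] fix1 z pA by simp
    moreover have "\<phi> (aff_mult (A *v ?z, mat 1) g) = (A *v ?z + a', A')"
      using phi_hom[OF G_trans[OF sub tr Az] g] fix1 Az pA by simp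
    ultimately show ?thesis using e by simp
  qed
  hence "A' = A" by (rule cols_eq)
  thus ?thesis using gA pA by simp
qed

lemma phi_fst: assumes g: "g \<in> \<Gamma>" and h: "h \<in> \<Gamma>" and s: "snd g = snd h"
  shows "fst (\<phi> h) - fst h = fst (\<phi> g) - fst g"
proof -
  obtain a A where gA: "g = (a,A)" by fastforce
  obtain b where hB: "h = (b,A)" using s gA by (cases h) auto
  define w where "w = b - a"
  have w: "w \<in> int_vecs" using G_diff[OF sub tr] g h gA hB w_def by blast
  have "h = aff_mult (w, mat 1) g" using gA hB w_def by simp
  hence "\<phi> h = aff_mult (w, mat 1) (\<phi> g)"
    using phi_hom[OF G_trans[OF sub tr w] g] fix1 w by simp
  thus ?thesis using gA hB w_def by (simp add: aff_mult_def algebra_simps)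
qed

definition cc :: "real^'n^'n \<Rightarrow> real^'n" where
  "cc A = fst (\<phi> (SOME g. g \<in> \<Gamma> \<and> snd g = A)) - fst (SOME g. g \<in> \<Gamma> \<and> snd g = A)"

lemma phi_form: assumes g: "g \<in> \<Gamma>" shows "\<phi> g = (fst g + cc (snd g), snd g)"
proof -
  let ?s = "SOME h. h \<in> \<Gamma> \<and> snd h = snd g"
  have "?s \<in> \<Gamma> \<and> snd ?s = snd g" by (rule someI[of _ g]) (simp add: g)
  hence "fst (\<phi> g) - fst g = fst (\<phi> ?s) - fst ?s" using phi_fst[OF _ g] by simp
  hence "fst (\<phi> g) = fst g + cc (snd g)" unfolding cc_def by (simp add: algebra_simps)
  thus ?thesis using phi_snd[OF g] by (simp add: prod_eq_iff)
qed

lemma cc_int: assumes g: "g \<in> \<Gamma>" shows "cc (snd g) \<in> int_vecs"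
proof -
  have "(fst g + cc (snd g), snd g) \<in> \<Gamma>" using phi_mem[OF g] phi_form[OF g] by simp
  moreover have "(fst g, snd g) \<in> \<Gamma>" using g by simp
  ultimately have "(fst g + cc (snd g)) - fst g \<in> int_vecs" using G_diff[OF sub tr] by blast
  thus ?thesis by simp
qed

lemma cocycle: assumes g: "g \<in> \<Gamma>" and h: "h \<in> \<Gamma>"
  shows "cc (snd g ** snd h) = cc (snd g) + snd g *v cc (snd h)"
proof -
  have gh: "aff_mult g h \<in> \<Gamma>" using G_mult[OF sub tr] g h by blast
  have e1: "\<phi> (aff_mult g h) = (fst g + snd g *v fst h + cc (snd g ** snd h), snd g ** snd h)"
    using phi_form[OF gh] by (simp add: aff_mult_def)
  have e2: "aff_mult (\<phi> g) (\<phi> h) = (fst g + cc (snd g) + snd g *v (fst h + cc (snd h)), snd g ** snd h)"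
    using phi_form[OF g] phi_form[OF h] by (simp add: aff_mult_def)
  have "fst g + snd g *v fst h + cc (snd g ** snd h) = fst g + cc (snd g) + snd g *v (fst h + cc (snd h))"
    using phi_hom[OF g h] e1 e2 by simp
  thus ?thesis by (simp add: algebra_simps)
qed

lemma phi_xi:
  assumes fin: "finite (snd ` \<Gamma>)"
  defines "d \<equiv> (1 / real (card (snd ` \<Gamma>))) *\<^sub>R (\<Sum>B\<in>snd ` \<Gamma>. cc B)"
  shows "\<forall>g\<in>\<Gamma>. cc (snd g) = d - snd g *v d"
proof
  fix g assume g: "g \<in> \<Gamma>"
  let ?F = "snd ` \<Gamma>" and ?A = "snd g"
  let ?S = "\<Sum>B\<in>snd ` \<Gamma>. cc B"
  define m where "m = card ?F"
  have mpos: "m > 0" unfolding m_def using fin G_one[OF sub tr] card_gt_0_iff by blast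
  have inj: "inj_on (\<lambda>B. ?A ** B) ?F"
  proof (rule inj_onI)
    fix B B' assume "?A ** B = ?A ** B'"
    hence "matrix_inv ?A ** (?A ** B) = matrix_inv ?A ** (?A ** B')" by simp
    thus "B = B'" using minv(2)[OF G_invertible[OF sub tr g]] by (simp add: matrix_mul_assoc)
  qed
  have sub': "(\<lambda>B. ?A ** B) ` ?F \<subseteq> ?F"
  proof
    fix X assume "X \<in> (\<lambda>B. ?A ** B) ` ?F"
    then obtain h where h: "h \<in> \<Gamma>" "X = ?A ** snd h" by auto
    have "aff_mult g h \<in> \<Gamma>" using G_mult[OF sub tr g h(1)] .
    moreover have "snd (aff_mult g h) = X" using h by (cases g; cases h) simp
    ultimately show "X \<in> ?F" by force
  qed
  have img: "(\<lambda>B. ?A ** B) ` ?F = ?F" by (rule endo_inj_surj[OF fin sub' inj])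
  have "?S = sum (cc \<circ> (\<lambda>B. ?A ** B)) ?F"
    using sum.reindex[OF inj, of cc] img by simp
  also have "\<dots> = (\<Sum>B\<in>?F. cc ?A + ?A *v cc B)"
  proof (rule sum.cong)
    fix B assume "B \<in> ?F"
    then obtain h where h: "h \<in> \<Gamma>" "B = snd h" by auto
    show "(cc \<circ> (\<lambda>B. ?A ** B)) B = cc ?A + ?A *v cc B" using cocycle[OF g h(1)] h by simp
  qed simp
  also have "\<dots> = real m *\<^sub>R cc ?A + ?A *v ?S"
    by (simp add: sum.distrib mv_sum m_def scaleR_conv_of_real)
  finally have "real m *\<^sub>R cc ?A = ?S - ?A *v ?S" by (simp add: algebra_simps)
  hence "(1 / real m) *\<^sub>R (real m *\<^sub>R cc ?A) = (1 / real m) *\<^sub>R (?S - ?A *v ?S)" by simp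
  hence "cc ?A = (1 / real m) *\<^sub>R ?S - ?A *v ((1 / real m) *\<^sub>R ?S)"
    using mpos by (simp add: mv_scaleR scaleR_diff_right)
  thus "cc ?A = d - ?A *v d" unfolding d_def m_def .
qed

end

theorem theorem5p3:
  fixes \<Gamma> :: "'n::finite aff set"
  assumes "crystallographic \<Gamma>"
    and "{z. (z, mat 1) \<in> \<Gamma>} = int_vecs"
  shows "\<exists>\<Delta>. finite \<Delta> \<and> (\<forall>d\<in>\<Delta>. is_aut \<Gamma> (xi (d, mat 1))) \<and>
    (\<forall>\<phi>. is_aut \<Gamma> \<phi> \<and> (\<forall>z\<in>int_vecs. \<phi> (z, mat 1) = (z, mat 1)) \<longrightarrow>
      (\<exists>dint\<in>int_vecs. \<exists>dbase\<in>\<Delta>.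
         \<forall>g\<in>\<Gamma>. \<phi> g = xi (dint, mat 1) (xi (dbase, mat 1) g)))"
proof -
  note cr = assms(1) and tr = assms(2)
  have sub: "aff_subgroup \<Gamma> Aff" using cr unfolding crystallographic_def by (rule conjunct1)
  have fin: "finite (snd ` \<Gamma>)" by (rule finite_holonomy[OF cr tr])
  define m where "m = card (snd ` \<Gamma>)"
  have mpos: "m > 0" unfolding m_def using fin G_one[OF sub tr] card_gt_0_iff by blast
  define K where "K = (\<lambda>k::int. of_int k / real m) ` {0..<int m}"
  define \<Delta> where "\<Delta> = {v::real^'n. (\<forall>i. v$i \<in> K) \<and> is_aut \<Gamma> (xi (v, mat 1))}"
  have finD: "finite \<Delta>"
  proof -
    have "\<Delta> \<subseteq> {v. \<forall>i. v$i \<in> K}" unfolding \<Delta>_def by blast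
    moreover have "finite {v::real^'n. \<forall>i. v$i \<in> K}" by (rule finite_vecs) (simp add: K_def)
    ultimately show ?thesis by (rule finite_subset)
  qed
  show ?thesis
  proof (intro exI[of _ \<Delta>] conjI allI impI)
    show "finite \<Delta>" by (rule finD)
    show "\<forall>d\<in>\<Delta>. is_aut \<Gamma> (xi (d, mat 1))" unfolding \<Delta>_def by blast
    fix \<phi> assume H: "is_aut \<Gamma> \<phi> \<and> (\<forall>z\<in>int_vecs. \<phi> (z, mat 1) = (z, mat 1))"
    have aut: "is_aut \<Gamma> \<phi>" and fx: "\<forall>z\<in>int_vecs. \<phi> (z, mat 1) = (z, mat 1)" using H by auto
    define S where "S = (\<Sum>B\<in>snd ` \<Gamma>. cc \<Gamma> \<phi> B)"
    define d where "d = (1 / real m) *\<^sub>R S"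
    have cceq: "\<forall>g\<in>\<Gamma>. cc \<Gamma> \<phi> (snd g) = d - snd g *v d"
      using phi_xi[OF sub tr aut fx fin] unfolding d_def S_def m_def .
    have Sint: "S \<in> int_vecs" unfolding S_def
      by (rule int_vecs_sum) (auto intro: cc_int[OF sub tr aut fx])
    define dint :: "real^'n" where "dint = (\<chi> i. of_int \<lfloor>d$i\<rfloor>)"
    define dbase where "dbase = d - dint"
    have dint: "dint \<in> int_vecs" by (simp add: dint_def int_vecs_def)
    have comp: "dbase$i \<in> K" for i
    proof -
      obtain s where s: "S$i = of_int s" using Sint by (auto simp: int_vecs_def elim: Ints_cases)
      have rm: "real m = of_int (int m)" by simp
      have di: "d$i = of_int s / of_int (int m)" by (simp add: d_def s)
      have fl: "\<lfloor>d$i\<rfloor> = s div int m" unfolding di by (rule floor_divide_of_int_eq)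
      have "of_int s = (of_int (int m) * of_int (s div int m) + of_int (s mod int m) :: real)"
        by (metis of_int_add of_int_mult div_mult_mod_eq mult.commute)
      hence eq: "of_int s - real m * of_int (s div int m) = (of_int (s mod int m) :: real)" by simp
      have "dbase$i = d$i - of_int \<lfloor>d$i\<rfloor>" by (simp add: dbase_def dint_def)
      also have "\<dots> = of_int s / real m - of_int (s div int m)" unfolding fl using di by simp
      also have "\<dots> = (of_int s - real m * of_int (s div int m)) / real m"
        using mpos by (simp add: field_simps)
      also have "\<dots> = of_int (s mod int m) / real m" by (simp only: eq)
      finally have "dbase$i = of_int (s mod int m) / real m" .
      moreover have "s mod int m \<in> {0..<int m}" using mpos by simp
      ultimately show ?thesis unfolding K_def by blast
    qed
    have autb: "is_aut \<Gamma> (xi (dbase, mat 1))"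
    proof (rule is_aut_xi[OF sub tr], rule ballI)
      fix g assume g: "g \<in> \<Gamma>"
      have g': "(fst g, snd g) \<in> \<Gamma>" using g by simp
      have "snd g *v dint \<in> int_vecs" by (rule G_Aint[OF sub tr g' dint])
      hence "cc \<Gamma> \<phi> (snd g) - (dint - snd g *v dint) \<in> int_vecs"
        using cc_int[OF sub tr aut fx g] dint by (intro int_vecs_diff)
      moreover have "cc \<Gamma> \<phi> (snd g) - (dint - snd g *v dint) = dbase - snd g *v dbase"
        using cceq g by (simp add: dbase_def matrix_vector_mult_diff_distrib algebra_simps)
      ultimately show "dbase - snd g *v dbase \<in> int_vecs" by simp
    qed
    have "dbase \<in> \<Delta>" unfolding \<Delta>_def using comp autb by blast
    moreover have "\<forall>g\<in>\<Gamma>. \<phi> g = xi (dint, mat 1) (xi (dbase, mat 1) g)"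
    proof
      fix g assume g: "g \<in> \<Gamma>"
      have "\<phi> g = (fst g + (d - snd g *v d), snd g)"
        using phi_form[OF sub tr aut fx g] cceq g by simp
      thus "\<phi> g = xi (dint, mat 1) (xi (dbase, mat 1) g)"
        by (simp add: xi_trans' dbase_def matrix_vector_mult_diff_distrib algebra_simps)
    qed
    ultimately show "\<exists>dint\<in>int_vecs. \<exists>dbase\<in>\<Delta>. \<forall>g\<in>\<Gamma>. \<phi> g = xi (dint, mat 1) (xi (dbase, mat 1) g)"
      using dint by blast
  qed
qed

end
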